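(* The inequality $\lambda_s(a,b)\le H(a,b)$ holds for all $a,b>0$ if and only if $s\le -4$.
   Context: For $a,b>0$ with $a\neq b$ define $$\lambda_s(a,b)=\begin{cases}\dfrac{s-1}{s+1}\cdot\dfrac{a^{s+1}+b^{s+1}-2\left(\frac{a+b}{2}\right)^{s+1}}{a^s+b^s-2\left(\frac{a+b}{2}\right)^s}, & s\in\mathbb{R}\setminus\{-1,0,1\},\\[3mm] \dfrac{2\log\frac{a+b}{2}-\log a-\log b}{\frac{1}{2a}+\frac{1}{2b}-\frac{2}{a+b}}, & s=-1,\\[3mm] \dfrac{a\log a+b\log b-(a+b)\log\frac{a+b}{2}}{2\log\frac{a+b}{2}-\log a-\log b}, & s=0,\\[3mm] \dfrac{(b-a)^2}{4\left(a\log a+b\log b-(a+b)\log\frac{a+b}{2}\right)}, & s=1,\end{cases}$$ and $\lambda_s(a,a)=a$. The harmonic mean is $H(a,b)=2(1/a+1/b)^{-1}$. *)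

theory Defs
  imports Complex_Main
begin

definition lambda_mean :: "real \<Rightarrow> real \<Rightarrow> real \<Rightarrow> real" where
  "lambda_mean s a b =
    (if a = b then a
     else if s = -1 then
       (2 * ln ((a + b) / 2) - ln a - ln b) / (1 / (2 * a) + 1 / (2 * b) - 2 / (a + b))
     else if s = 0 then
       (a * ln a + b * ln b - (a + b) * ln ((a + b) / 2)) / (2 * ln ((a + b) / 2) - ln a - ln b)
     else if s = 1 then
       (b - a)^2 / (4 * (a * ln a + b * ln b - (a + b) * ln ((a + b) / 2)))
     else
       (s - 1) / (s + 1) *
       ((a powr (s + 1) + b powr (s + 1) - 2 * ((a + b) / 2) powr (s + 1)) /
        (a powr s + b powr s - 2 * ((a + b) / 2) powr s)))"

definition harmonic_mean :: "real \<Rightarrow> real \<Rightarrow> real" where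
  "harmonic_mean a b = 2 / (1 / a + 1 / b)"

end

theory Submission imports Defs begin

lemma dF:
  fixes x e al be ga et :: real
  assumes "-1 < x" "x < 1"
  shows "((\<lambda>x. (1-x) powr e * (al*x+be) + (1+x) powr e * (ga*x+et)) has_real_derivative
     ((1-x) powr (e-1) * (-(e+1)*al*x + (al - e*be)) + (1+x) powr (e-1) * ((e+1)*ga*x + (e*et+ga)))) (at x)"
proof -
  have p1: "1 - x > 0" "1 + x > 0" using assms by auto
  have d: "((\<lambda>x. (1-x) powr e * (al*x+be) + (1+x) powr e * (ga*x+et)) has_real_derivative
     (e * (1-x) powr (e-1) * (0-1) * (al*x+be) + (1-x) powr e * (al*1+0) +
      (e * (1+x) powr (e-1) * (0+1) * (ga*x+et) + (1+x) powr e * (ga*1+0)))) (at x)"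
    by (intro derivative_eq_intros p1 refl | simp)+
  have e1: "(1-x) powr e = (1-x) powr (e-1) * (1-x)" 
    using p1 powr_add[of "1-x" "e-1" 1] by simp
  have e2: "(1+x) powr e = (1+x) powr (e-1) * (1+x)"
    using p1 powr_add[of "1+x" "e-1" 1] by simp
  show ?thesis
    apply (rule DERIV_cong[OF d])
    apply (simp only: e1 e2)
    by (simp add: algebra_simps)
qed

lemma chain:
  fixes f f' :: "real \<Rightarrow> real"
  assumes d: "\<And>y. 0 \<le> y \<Longrightarrow> y < c \<Longrightarrow> (f has_real_derivative f' y) (at y)"
    and f0: "f 0 = 0"
    and pos: "\<And>y. 0 < y \<Longrightarrow> y < c \<Longrightarrow> \<sigma> * f' y > 0"
    and y: "0 < y" "y < c"
  shows "\<sigma> * f y > 0"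
proof -
  have "\<exists>z. 0 < z \<and> z < y \<and> (\<sigma> * f y - \<sigma> * f 0 = (y - 0) * (\<sigma> * f' z))"
    by (rule MVT2) (use y in \<open>auto intro!: DERIV_cmult d\<close>)
  then obtain z where z: "0 < z" "z < y" "\<sigma> * f y - \<sigma> * f 0 = y * (\<sigma> * f' z)" by auto
  have "\<sigma> * f' z > 0" using pos z y by auto
  moreover have "\<sigma> * f y = y * (\<sigma> * f' z)" using z f0 by simp
  ultimately show ?thesis using y by (metis mult_pos_pos)
qed

definition G0 :: "real \<Rightarrow> real \<Rightarrow> real" where "G0 r x = (1-x) powr (-r) * (r*x-2) + (1+x) powr (-r) * (-r*x-2) + 4 + 2*r*x^2"
definition G1 :: "real \<Rightarrow> real \<Rightarrow> real" where "G1 r x = (1-x) powr (-r-1) * (r*(r-1)*x - r) + (1+x) powr (-r-1) * (r*(r-1)*x + r) + 4*r*x"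
definition G2 :: "real \<Rightarrow> real \<Rightarrow> real" where "G2 r x = (1-x) powr (-r-2) * (r^2*(r-1)*x - 2*r) + (1+x) powr (-r-2) * (-(r^2*(r-1))*x - 2*r) + 4*r"
definition G3 :: "real \<Rightarrow> real \<Rightarrow> real" where "G3 r x = (1-x) powr (-r-3) * ((r+1)*r^2*(r-1)*x + r*(r-4)*(r+1)) + (1+x) powr (-r-3) * ((r+1)*r^2*(r-1)*x - r*(r-4)*(r+1))"
definition G4 :: "real \<Rightarrow> real \<Rightarrow> real" where "G4 r x = (1-x) powr (-r-4) * ((r+2)*(r+1)*r^2*(r-1)*x + 2*r*(r+1)*(r+2)*(r-3)) + (1+x) powr (-r-4) * (-((r+2)*(r+1)*r^2*(r-1))*x + 2*r*(r+1)*(r+2)*(r-3))"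


lemma psplit: "0 < (y::real) \<Longrightarrow> y powr e = y powr (e-1) * y"
  using powr_add[of y "e-1" 1] by simp

lemma dG0: assumes "-1 < x" "x < 1" shows "((\<lambda>x. G0 r x) has_real_derivative G1 r x) (at x)"
proof -
  have p: "0 < 1 - x" "0 < 1 + x" using assms by auto
  show ?thesis unfolding G0_def G1_def
    apply (rule DERIV_cong)
     apply (rule derivative_eq_intros refl p | simp)+
    apply (simp only: psplit[OF p(1), of "-r"] psplit[OF p(2), of "-r"])
    by (simp add: algebra_simps)
qed

lemma psplit': "0 < (y::real) \<Longrightarrow> e = f + 1 \<Longrightarrow> y powr e = y powr f * y"
  using powr_add[of y f 1] by simp

lemma dG1: assumes "-1 < x" "x < 1" shows "((\<lambda>x. G1 r x) has_real_derivative G2 r x) (at x)"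
proof -
  have p: "0 < 1 - x" "0 < 1 + x" using assms by auto
  have s1: "(1-x) powr (-r-1) = (1-x) powr (-r-2) * (1-x)" by (rule psplit') (use p in auto)
  have s2: "(1+x) powr (-r-1) = (1+x) powr (-r-2) * (1+x)" by (rule psplit') (use p in auto)
  have ex: "-r-1-1 = -r-2" by simp
  show ?thesis unfolding G1_def G2_def
    apply (rule DERIV_cong)
     apply (rule derivative_eq_intros refl p)+
    apply (simp only: s1 s2 ex)
    by (simp add: algebra_simps power2_eq_square)
qed

lemma dG2: assumes "-1 < x" "x < 1" shows "((\<lambda>x. G2 r x) has_real_derivative G3 r x) (at x)"
proof -
  have p: "0 < 1 - x" "0 < 1 + x" using assms by auto
  have s1: "(1-x) powr (-r-2) = (1-x) powr (-r-3) * (1-x)" by (rule psplit') (use p in auto)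
  have s2: "(1+x) powr (-r-2) = (1+x) powr (-r-3) * (1+x)" by (rule psplit') (use p in auto)
  have ex: "-r-2-1 = -r-3" by simp
  show ?thesis unfolding G2_def G3_def
    apply (rule DERIV_cong)
     apply (rule derivative_eq_intros refl p)+
    apply (simp only: s1 s2 ex)
    by (simp add: algebra_simps power2_eq_square)
qed

lemma dG3: assumes "-1 < x" "x < 1" shows "((\<lambda>x. G3 r x) has_real_derivative G4 r x) (at x)"
proof -
  have p: "0 < 1 - x" "0 < 1 + x" using assms by auto
  have s1: "(1-x) powr (-r-3) = (1-x) powr (-r-4) * (1-x)" by (rule psplit') (use p in auto)
  have s2: "(1+x) powr (-r-3) = (1+x) powr (-r-4) * (1+x)" by (rule psplit') (use p in auto)
  have ex: "-r-3-1 = -r-4" by simp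
  show ?thesis unfolding G3_def G4_def
    apply (rule DERIV_cong)
     apply (rule derivative_eq_intros refl p)+
    apply (simp only: s1 s2 ex)
    by (simp add: algebra_simps power2_eq_square)
qed

lemma G4_pos: assumes "r \<ge> 3" "0 < x" "x < 1" shows "G4 r x > 0"
proof -
  have A: "(1+x) powr (-r-4) < (1-x) powr (-r-4)"
    by (rule powr_less_mono2_neg) (use assms in auto)
  have c0: "2*r*(r+1)*(r+2)*(r-3) \<ge> 0" using assms by simp
  have c1: "(r+2)*(r+1)*r^2*(r-1) > 0" using assms by simp
  have "G4 r x = 2*r*(r+1)*(r+2)*(r-3) * ((1-x) powr (-r-4) + (1+x) powr (-r-4))
     + (r+2)*(r+1)*r^2*(r-1) * x * ((1-x) powr (-r-4) - (1+x) powr (-r-4))"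
    unfolding G4_def by (simp add: algebra_simps)
  moreover have "2*r*(r+1)*(r+2)*(r-3) * ((1-x) powr (-r-4) + (1+x) powr (-r-4)) \<ge> 0"
    by (rule mult_nonneg_nonneg[OF c0]) simp
  moreover have "(r+2)*(r+1)*r^2*(r-1) * x * ((1-x) powr (-r-4) - (1+x) powr (-r-4)) > 0"
    using c1 A assms by (intro mult_pos_pos) auto
  ultimately show ?thesis by linarith
qed

lemma Gk_chain:
  assumes c: "c \<le> 1" and pos: "\<And>y. 0 < y \<Longrightarrow> y < c \<Longrightarrow> \<sigma> * G4 r y > 0"
    and y: "0 < y" "y < c"
  shows "\<sigma> * G0 r y > 0"
proof -
  have h3: "\<sigma> * G3 r z > 0" if "0 < z" "z < c" for z
    by (rule chain[where f'="G4 r"]) (use dG3 c pos that in \<open>auto simp: G3_def\<close>)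
  have h2: "\<sigma> * G2 r z > 0" if "0 < z" "z < c" for z
    by (rule chain[where f'="G3 r"]) (use dG2 c h3 that in \<open>auto simp: G2_def\<close>)
  have h1: "\<sigma> * G1 r z > 0" if "0 < z" "z < c" for z
    by (rule chain[where f'="G2 r"]) (use dG1 c h2 that in \<open>auto simp: G1_def\<close>)
  show ?thesis
    by (rule chain[where f'="G1 r"]) (use dG0 c h1 y in \<open>auto simp: G0_def\<close>)
qed

lemma G0_pos: assumes "r \<ge> 3" "0 < x" "x < 1" shows "G0 r x > 0"
  using Gk_chain[of 1 1 r x] G4_pos[of r] assms by auto

lemma W_sign: fixes p x :: real assumes "p \<noteq> 0" "p \<noteq> 1" "0 < x" "x < 1"
  shows "p*(p-1) * ((1-x) powr p + (1+x) powr p - 2) > 0"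
proof -
  let ?W = "\<lambda>x. (1-x) powr p + (1+x) powr p - 2"
  let ?W1 = "\<lambda>x. - p * (1-x) powr (p-1) + p * (1+x) powr (p-1)"
  let ?W2 = "\<lambda>x. p*(p-1) * ((1-x) powr (p-2) + (1+x) powr (p-2))"
  have d1: "(?W has_real_derivative ?W1 y) (at y)" if "0 \<le> y" "y < 1" for y
  proof -
    have p: "0 < 1 - y" "0 < 1 + y" using that by auto
    show ?thesis
      by (rule DERIV_cong, (rule derivative_eq_intros refl p)+) (simp add: algebra_simps)
  qed
  have d2: "(?W1 has_real_derivative ?W2 y) (at y)" if "0 \<le> y" "y < 1" for y
  proof -
    have p: "0 < 1 - y" "0 < 1 + y" using that by auto
    have ex: "p - 1 - 1 = p - 2" by simp
    show ?thesis
      by (rule DERIV_cong, (rule derivative_eq_intros refl p)+) (simp only: ex, simp add: algebra_simps)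
  qed
  have pos2: "p*(p-1) * ?W2 y > 0" if "0 < y" "y < 1" for y
  proof -
    have "p*(p-1) \<noteq> 0" using assms by simp
    then have "(p*(p-1))*(p*(p-1)) > 0" by (metis not_real_square_gt_zero)
    moreover have "(1-y) powr (p-2) > 0" "(1+y) powr (p-2) > 0" using that by simp_all
    then have "(1-y) powr (p-2) + (1+y) powr (p-2) > 0" by linarith
    ultimately have "(p*(p-1))*(p*(p-1)) * ((1-y) powr (p-2) + (1+y) powr (p-2)) > 0" by (rule mult_pos_pos)
    then show ?thesis by (simp add: mult.assoc)
  qed
  have pos1: "p*(p-1) * ?W1 y > 0" if "0 < y" "y < 1" for y
    by (rule chain[where f = ?W1 and f' = ?W2 and c = 1]) (use d2 pos2 that in auto)
  show ?thesis
    by (rule chain[where f = ?W and f' = ?W1 and c = 1]) (use d1 pos1 assms in auto)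
qed

lemma local_exist:
  assumes "c0 \<noteq> 0" "c0 = 2*r*(r+1)*(r+2)*(r-3)"
  shows "\<exists>y. 0 < y \<and> y < 1 \<and> c0 * G0 r y > 0"
proof -
  have cont: "isCont (\<lambda>y. c0 * G4 r y) 0"
    unfolding G4_def by (intro continuous_intros) auto
  have "G4 r 0 = 2 * c0" using assms(2) by (simp add: G4_def)
  moreover have "c0 * c0 > 0" using assms(1) by (metis not_real_square_gt_zero)
  ultimately have v: "c0 * G4 r 0 > 0" by simp
  have "\<forall>\<^sub>F y in at 0. c0 * G4 r y > 0"
    using order_tendstoD(1)[OF cont[unfolded isCont_def] v] .
  then obtain d where d: "d > 0" "\<And>y. y \<noteq> 0 \<Longrightarrow> dist y 0 < d \<Longrightarrow> c0 * G4 r y > 0"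
    unfolding eventually_at by auto
  define c where "c = min d 1"
  have pos: "c0 * G4 r y > 0" if "0 < y" "y < c" for y
    using d(2)[of y] that by (auto simp: c_def)
  have "c0 * G0 r (c/2) > 0"
    by (rule Gk_chain[where c = c]) (use pos d in \<open>auto simp: c_def\<close>)
  then show ?thesis using d by (intro exI[of _ "c/2"]) (auto simp: c_def)
qed

lemma ident:
  fixes s m x :: real
  assumes m: "m > 0" and x: "0 < x" "x < 1" and s: "s \<noteq> -1" "s \<noteq> 0" "s \<noteq> 1"
    and W: "(1-x) powr s + (1+x) powr s - 2 \<noteq> 0"
  shows "lambda_mean s (m*(1-x)) (m*(1+x)) - harmonic_mean (m*(1-x)) (m*(1+x))
     = m * G0 (-(s+1)) x / ((s+1) * ((1-x) powr s + (1+x) powr s - 2))"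
proof -
  have p: "0 < 1 - x" "0 < 1 + x" using x by auto
  define A where "A = (1-x) powr s"
  define B where "B = (1+x) powr s"
  define M where "M = m powr s"
  have M: "M > 0" using m by (simp add: M_def)
  have ne: "m*(1-x) \<noteq> m*(1+x)" using m x by auto
  have mid: "(m*(1-x) + m*(1+x))/2 = m" by (simp add: algebra_simps)
  have e1: "(m*(1-x)) powr s = M * A" unfolding M_def A_def using m p by (simp add: powr_mult)
  have e2: "(m*(1+x)) powr s = M * B" unfolding M_def B_def using m p by (simp add: powr_mult)
  have e3: "(m*(1-x)) powr (s+1) = M * A * (m*(1-x))" using psplit'[of "m*(1-x)" "s+1" s] m p e1 by simp
  have e4: "(m*(1+x)) powr (s+1) = M * B * (m*(1+x))" using psplit'[of "m*(1+x)" "s+1" s] m p e2 by simp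
  have e5: "m powr (s+1) = M * m" using psplit'[of m "s+1" s] m by (simp add: M_def)
  have e6: "(1-x) powr (s+1) = A * (1-x)" using psplit'[of "1-x" "s+1" s] p by (simp add: A_def)
  have e7: "(1+x) powr (s+1) = B * (1+x)" using psplit'[of "1+x" "s+1" s] p by (simp add: B_def)
  have W': "A + B - 2 \<noteq> 0" using W by (simp add: A_def B_def)
  have s1: "s + 1 \<noteq> 0" using s by auto
  have L: "lambda_mean s (m*(1-x)) (m*(1+x)) = (s - 1) / (s + 1) * ((M*A*(m*(1-x)) + M*B*(m*(1+x)) - 2*(M*m)) / (M*A + M*B - 2*M))"
    unfolding lambda_mean_def using ne s by (simp only: mid e1 e2 e3 e4 e5 if_False M_def[symmetric])
  have Gx: "G0 (-(s+1)) x = A*(1-x) * (-(s+1)*x-2) + B*(1+x)*((s+1)*x-2) + 4 - 2*(s+1)*x^2"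
    unfolding G0_def minus_minus e6 e7 by (simp add: algebra_simps)
  have Hx: "harmonic_mean (m*(1-x)) (m*(1+x)) = m*(1-x)*(1+x)"
  proof -
    have a: "m*(1-x) \<noteq> 0" "m*(1+x) \<noteq> 0" using m p by auto
    have S: "(1/(m*(1-x)) + 1/(m*(1+x))) * (m*(1-x)*(1+x)) = 2"
    proof -
      have "1/(m*(1-x)) * (m*(1-x)*(1+x)) = 1+x" using a by simp
      moreover have "1/(m*(1+x)) * (m*(1-x)*(1+x)) = 1-x" using a by simp
      ultimately show ?thesis by (simp add: distrib_right)
    qed
    then have "1/(m*(1-x)) + 1/(m*(1+x)) \<noteq> 0" by auto
    then show ?thesis unfolding harmonic_mean_def using S
      by (metis nonzero_mult_div_cancel_left)
  qed
  have q: "(M*A*(m*(1-x)) + M*B*(m*(1+x)) - 2*(M*m)) / (M*A + M*B - 2*M) = m*(A*(1-x)+B*(1+x)-2)/(A+B-2)"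
  proof -
    have "M*A + M*B - 2*M = M*(A+B-2)" by (simp add: algebra_simps)
    moreover have "M*A*(m*(1-x)) + M*B*(m*(1+x)) - 2*(M*m) = M*(m*(A*(1-x)+B*(1+x)-2))" by (simp add: algebra_simps)
    ultimately show ?thesis using M by simp
  qed
  define D where "D = (s+1)*(A+B-2)"
  have D: "D \<noteq> 0" using W' s1 by (simp add: D_def)
  have r1: "(s - 1) / (s + 1) * (m*(A*(1-x)+B*(1+x)-2)/(A+B-2)) = (s-1)*(m*(A*(1-x)+B*(1+x)-2)) / D"
    by (simp add: D_def)
  have r2: "(s-1)*(m*(A*(1-x)+B*(1+x)-2)) / D - m*(1-x)*(1+x) = ((s-1)*(m*(A*(1-x)+B*(1+x)-2)) - m*(1-x)*(1+x)*D) / D"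
    using D by (simp add: diff_divide_distrib)
  have r3: "(s-1)*(m*(A*(1-x)+B*(1+x)-2)) - m*(1-x)*(1+x)*D = m * (A*(1-x) * (-(s+1)*x-2) + B*(1+x)*((s+1)*x-2) + 4 - 2*(s+1)*x^2)"
    unfolding D_def by (simp add: algebra_simps power2_eq_square)
  show ?thesis
    unfolding L Gx Hx q A_def[symmetric] B_def[symmetric] r1 r2 r3 D_def[symmetric] ..
qed

lemma lam_sym: "lambda_mean s a b = lambda_mean s b a"
  by (auto simp: lambda_mean_def ac_simps power2_commute)

lemma H_sym: "harmonic_mean a b = harmonic_mean b a"
  by (simp add: harmonic_mean_def ac_simps)

lemma scale:
  fixes a b :: real assumes "0 < a" "a < b"
  shows "(a+b)/2 * (1 - (b-a)/(a+b)) = a" "(a+b)/2 * (1 + (b-a)/(a+b)) = b"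
    "0 < (b-a)/(a+b)" "(b-a)/(a+b) < 1" "(a+b)/2 > 0"
  using assms by (auto simp: field_simps)

lemma forward:
  fixes s a b :: real assumes s: "s \<le> -4" and ab: "0 < a" "a < b"
  shows "lambda_mean s a b \<le> harmonic_mean a b"
proof -
  define m where "m = (a+b)/2"
  define x where "x = (b-a)/(a+b)"
  note sc = scale[OF ab, folded m_def x_def]
  have W: "s*(s-1) * ((1-x) powr s + (1+x) powr s - 2) > 0"
    by (rule W_sign) (use s sc in auto)
  have ss: "s*(s-1) > 0" using s by (simp add: mult_neg_neg)
  have Wp: "(1-x) powr s + (1+x) powr s - 2 > 0"
    using W ss by (simp add: zero_less_mult_iff)
  have G: "G0 (-(s+1)) x > 0" by (rule G0_pos) (use s sc in auto)
  have "lambda_mean s (m*(1-x)) (m*(1+x)) - harmonic_mean (m*(1-x)) (m*(1+x))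
     = m * G0 (-(s+1)) x / ((s+1) * ((1-x) powr s + (1+x) powr s - 2))"
    by (rule ident) (use s sc Wp in auto)
  moreover have "(s+1) * ((1-x) powr s + (1+x) powr s - 2) < 0"
    using s Wp by (simp add: mult_neg_pos)
  moreover have "m * G0 (-(s+1)) x > 0" using G sc by simp
  ultimately have "lambda_mean s (m*(1-x)) (m*(1+x)) - harmonic_mean (m*(1-x)) (m*(1+x)) < 0"
    by (simp add: divide_pos_neg)
  then show ?thesis using sc by simp
qed

lemma converse_generic:
  fixes s :: real assumes s: "s > -4" "s \<noteq> -1" "s \<noteq> 0" "s \<noteq> 1"
  shows "\<exists>a b. a > 0 \<and> b > 0 \<and> lambda_mean s a b > harmonic_mean a b"
proof -
  define r where "r = -(s+1)"
  define c0 where "c0 = 2*r*(r+1)*(r+2)*(r-3)"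
  have c0s: "c0 = 2*(s+1)*s*(s-1)*(s+4)" unfolding c0_def r_def by (simp add: algebra_simps)
  have "c0 \<noteq> 0" unfolding c0s using s by simp
  then obtain x where x: "0 < x" "x < 1" "c0 * G0 r x > 0"
    using local_exist[OF _ c0_def] by blast
  have W: "s*(s-1) * ((1-x) powr s + (1+x) powr s - 2) > 0"
    by (rule W_sign) (use s x in auto)
  define Wv where "Wv = (1-x) powr s + (1+x) powr s - 2"
  have Wne: "Wv \<noteq> 0" using W by (auto simp: Wv_def)
  have id: "lambda_mean s (1*(1-x)) (1*(1+x)) - harmonic_mean (1*(1-x)) (1*(1+x))
     = 1 * G0 (-(s+1)) x / ((s+1) * Wv)"
    unfolding Wv_def by (rule ident) (use s x Wne in \<open>auto simp: Wv_def\<close>)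
  have prod: "(c0 * G0 r x) * (s*(s-1) * Wv) > 0"
    using x W by (simp add: Wv_def)
  have k: "(c0 * G0 r x) * (s*(s-1) * Wv) = (2*s*s*(s-1)*(s-1)*(s+4)) * (G0 r x * ((s+1) * Wv))"
    unfolding c0s by (simp add: algebra_simps)
  have kp: "2*s*s*(s-1)*(s-1)*(s+4) > 0"
  proof -
    have "s*s > 0" using s by (metis not_real_square_gt_zero)
    moreover have "(s-1)*(s-1) > 0" using s by (metis not_real_square_gt_zero right_minus_eq)
    moreover have "2*(s+4) > 0" using s by simp
    ultimately have "(s*s) * ((s-1)*(s-1)) * (2*(s+4)) > 0" by (metis mult_pos_pos)
    then show ?thesis by (simp add: algebra_simps)
  qed
  have "G0 r x * ((s+1) * Wv) > 0"
    using prod kp unfolding k by (simp add: zero_less_mult_iff)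
  then have "G0 r x / ((s+1) * Wv) > 0"
    by (simp add: zero_less_mult_iff zero_less_divide_iff)
  then have "lambda_mean s (1-x) (1+x) > harmonic_mean (1-x) (1+x)"
    using id by (simp add: r_def)
  then show ?thesis using x by (intro exI[of _ "1-x"] exI[of _ "1+x"]) auto
qed

lemma lnfacts: "ln (4::real) = 2 * ln 2" "ln (8::real) = 3 * ln 2" "ln (9::real) = 2 * ln 3"
   "ln (19683::real) = 9 * ln 3" "ln (16384::real) = 14 * ln 2" "ln (16::real) = 4 * ln 2" "ln (27::real) = 3 * ln 3"
  using ln_realpow[of "2::real" 2] ln_realpow[of "2::real" 3] ln_realpow[of "3::real" 2]
    ln_realpow[of "3::real" 9] ln_realpow[of "2::real" 14] ln_realpow[of "2::real" 4] ln_realpow[of "3::real" 3]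
  by simp_all

lemma H13: "harmonic_mean 1 3 = 3/2" by (simp add: harmonic_mean_def)

lemma l43: "2 * ln 2 - ln 3 > (1/4::real)"
proof -
  define q where "q = sqrt 3 / (2::real)"
  have q0: "q > 0" by (simp add: q_def)
  have qq: "q * q = 3/4" by (simp add: q_def)
  have "sqrt (3::real) < 7/4"
  proof -
    have "sqrt (3::real) < sqrt ((7/4)^2)" by (simp only: real_sqrt_less_iff) (simp add: power2_eq_square)
    then show ?thesis by simp
  qed
  then have q1: "q - 1 < -1/8" by (simp add: q_def)
  have "ln q \<le> q - 1" using q0 by (rule ln_le_minus_one)
  moreover have "ln (3/4::real) = 2 * ln q"
  proof -
    have "ln (q*q) = ln q + ln q" using q0 by (simp add: ln_mult)
    then show ?thesis using qq by simp
  qed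
  moreover have "ln (3/4::real) = ln 3 - ln 4" by (simp add: ln_div)
  ultimately show ?thesis using q1 lnfacts(1) by linarith
qed

lemma sm1: "lambda_mean (-1) 1 3 > harmonic_mean 1 3"
proof -
  have "lambda_mean (-1) 1 3 = (2 * ln 2 - ln 3) * 6" by (simp add: lambda_mean_def)
  then show ?thesis using l43 H13 by simp
qed

lemma s0: "lambda_mean 0 1 3 > harmonic_mean 1 3"
proof -
  have d: "2 * ln 2 - ln 3 > (0::real)" using l43 by linarith
  have "ln (16384::real) < ln 19683" by simp
  then have k: "14 * ln 2 < 9 * ln (3::real)" using lnfacts by simp
  have e: "lambda_mean 0 1 3 = (3 * ln 3 - 4 * ln 2) / (2 * ln 2 - ln 3)"
    by (simp add: lambda_mean_def lnfacts)
  have "(3/2::real) * (2 * ln 2 - ln 3) < 3 * ln 3 - 4 * ln 2" using k by simp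
  then have "(3/2::real) < (3 * ln 3 - 4 * ln 2) / (2 * ln 2 - ln 3)"
    using d by (simp only: pos_less_divide_eq)
  then show ?thesis using H13 e by linarith
qed

lemma s1: "lambda_mean 1 1 3 > harmonic_mean 1 3"
proof -
  have "ln (16::real) < ln 27" by simp
  then have d: "3 * ln 3 - 4 * ln 2 > (0::real)" using lnfacts by simp
  have "ln (9/8::real) \<le> 9/8 - 1" by (rule ln_le_minus_one) simp
  moreover have "ln (3/2::real) \<le> 3/2 - 1" by (rule ln_le_minus_one) simp
  moreover have "ln (9/8::real) = 2 * ln 3 - 3 * ln 2" using lnfacts by (simp add: ln_div)
  moreover have "ln (3/2::real) = ln 3 - ln 2" by (simp add: ln_div)
  ultimately have u: "3 * ln 3 - 4 * ln 2 < (2/3::real)" by linarith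
  have e: "lambda_mean 1 1 3 = 4 / (4 * (3 * ln 3 - 4 * ln 2))"
    by (simp add: lambda_mean_def lnfacts)
  have "(3/2::real) * (4 * (3 * ln 3 - 4 * ln 2)) < 4" using u by simp
  then have "(3/2::real) < 4 / (4 * (3 * ln 3 - 4 * ln 2))"
    using d by (simp only: pos_less_divide_eq mult_pos_pos zero_less_numeral)
  then show ?thesis using H13 e by linarith
qed

theorem theorem3:
  fixes s :: real
  shows "(\<forall>a b. a > 0 \<longrightarrow> b > 0 \<longrightarrow> lambda_mean s a b \<le> harmonic_mean a b) \<longleftrightarrow> s \<le> -4"
proof
  assume h: "\<forall>a b. a > 0 \<longrightarrow> b > 0 \<longrightarrow> lambda_mean s a b \<le> harmonic_mean a b"
  show "s \<le> -4"
  proof (rule ccontr)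
    assume "\<not> s \<le> -4"
    then have s4: "s > -4" by simp
    show False
    proof (cases "s = -1 \<or> s = 0 \<or> s = 1")
      case True
      have le: "lambda_mean s 1 3 \<le> harmonic_mean 1 3" using h by simp
      from True show ?thesis
      proof (elim disjE)
        assume "s = -1" then show False using le sm1 by simp
      next
        assume "s = 0" then show False using le s0 by simp
      next
        assume "s = 1" then show False using le s1 by simp
      qed
    next
      case False
      then obtain a b where ab: "a > 0" "b > 0" "lambda_mean s a b > harmonic_mean a b"
        using converse_generic[OF s4] by blast
      have "lambda_mean s a b \<le> harmonic_mean a b" using h ab(1,2) by blast
      then show ?thesis using ab(3) by linarith
    qed
  qed
next
  assume s: "s \<le> -4"
  show "\<forall>a b. a > 0 \<longrightarrow> b > 0 \<longrightarrow> lambda_mean s a b \<le> harmonic_mean a b"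
  proof (intro allI impI)
    fix a b :: real assume a: "a > 0" and b: "b > 0"
    consider "a = b" | "a < b" | "b < a" by linarith
    then show "lambda_mean s a b \<le> harmonic_mean a b"
    proof cases
      case 1
      have "lambda_mean s a b = a" using 1 by (simp add: lambda_mean_def)
      moreover have "harmonic_mean a b = a" using 1 a by (simp add: harmonic_mean_def)
      ultimately show ?thesis by simp
    next
      case 2
      then show ?thesis using forward[OF s a] by simp
    next
      case 3
      then show ?thesis using forward[OF s b] lam_sym[of s a b] H_sym[of a b] by simp
    qed
  qed
qed

end
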